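(* Let $d\geq 2$ and $m\geq 1$ be integers. Let $\{e^d_k\}$ and $\{e^{d+m}_k\}$ be the standard bases of $\mathbb{C}^d$ and $\mathbb{C}^{d+m}$, and let $|J\rangle=\sum_{k=1}^d e^d_k$. Define $d\times(d+m)$ matrices $$V_i=\sum_{k=1}^{d}|e^d_k\rangle\langle e^{d+m}_{\mathrm{mod}(k+i-2,\,d+1)+1}|\quad (i=1,\dots,d+1),\qquad V_i=|J\rangle\langle e^{d+m}_i|\quad (i=d+2,\dots,d+m),$$ where $\mathrm{mod}(a,n)\in\{0,\dots,n-1\}$ is the remainder of $a$ modulo $n$, and let $\Phi:M_d\to M_{d+m}$ be $\Phi(X)=\frac{1}{d(d+m)}\sum_{i=1}^{d+m}V_i^\dagger XV_i$. Then the entanglement breaking rank of $\Phi$ equals $d+m$.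
   Context: $M_n$ denotes the complex $n\times n$ matrices. A completely positive map is entanglement breaking if its Choi matrix $\sum_{r,s}E_{rs}\otimes\Phi(E_{rs})$ is separable; equivalently, it admits a Kraus decomposition with all Kraus operators of rank one. The entanglement breaking rank of an entanglement breaking map $\Phi$ is the smallest $N$ such that $\Phi(X)=\sum_{i=1}^N R_iXR_i^\dagger$ with every $R_i$ of rank one. *)

theory Defs
  imports "Jordan_Normal_Form.Schur_Decomposition" "Jordan_Normal_Form.DL_Rank"
begin

definition mat_sum :: "nat \<Rightarrow> nat \<Rightarrow> (nat \<Rightarrow> complex mat) \<Rightarrow> nat \<Rightarrow> complex mat" where
  "mat_sum nr nc f N = mat nr nc (\<lambda>(a,b). \<Sum>i<N. f i $$ (a,b))"

definition mrank :: "nat \<Rightarrow> complex mat \<Rightarrow> nat" where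
  "mrank nr A = vec_space.rank nr A"

definition rank_one_kraus :: "nat \<Rightarrow> nat \<Rightarrow> (complex mat \<Rightarrow> complex mat) \<Rightarrow> nat \<Rightarrow> bool" where
  "rank_one_kraus n k Phi N \<longleftrightarrow>
     (\<exists>R :: nat \<Rightarrow> complex mat.
        (\<forall>i<N. R i \<in> carrier_mat k n \<and> mrank k (R i) = 1) \<and>
        (\<forall>X \<in> carrier_mat n n. Phi X = mat_sum k k (\<lambda>i. R i * X * mat_adjoint (R i)) N))"

definition entanglement_breaking :: "nat \<Rightarrow> nat \<Rightarrow> (complex mat \<Rightarrow> complex mat) \<Rightarrow> bool" where
  "entanglement_breaking n k Phi \<longleftrightarrow> (\<exists>N. rank_one_kraus n k Phi N)"

definition eb_rank :: "nat \<Rightarrow> nat \<Rightarrow> (complex mat \<Rightarrow> complex mat) \<Rightarrow> nat" where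
  "eb_rank n k Phi = (LEAST N. rank_one_kraus n k Phi N)"

text \<open>The d x (d+m) matrices V_i, with 0-based index i = 0..d+m-1 (paper's i-1).
  For i < d+1: V_i = sum_k |e_k><e_{(k+i) mod (d+1)}| (0-based k);
  for i >= d+1: V_i = |J><e_i|.\<close>
definition Vmat :: "nat \<Rightarrow> nat \<Rightarrow> nat \<Rightarrow> complex mat" where
  "Vmat d m i = mat d (d+m) (\<lambda>(k,j).
      if i \<le> d then (if j = (k + i) mod (d+1) then 1 else 0)
      else (if j = i then 1 else 0))"

definition Phi_map :: "nat \<Rightarrow> nat \<Rightarrow> complex mat \<Rightarrow> complex mat" where
  "Phi_map d m X = (1 / of_nat (d * (d+m))) \<cdot>\<^sub>m
     mat_sum (d+m) (d+m) (\<lambda>i. mat_adjoint (Vmat d m i) * X * Vmat d m i) (d+m)"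

end

theory Submission imports Defs "Jordan_Normal_Form.DL_Rank_Submatrix" begin

lemma rank_ge_1:
  fixes A :: "complex mat"
  assumes A: "A \<in> carrier_mat nr nc" and r: "r < nr" and c: "c < nc" and nz: "A $$ (r,c) \<noteq> 0"
  shows "1 \<le> vec_space.rank nr A"
proof -
  have cI: "{i. i < dim_row A \<and> i \<in> {r}} = {r}" using A r by blast
  have cJ: "{j. j < dim_col A \<and> j \<in> {c}} = {c}" using A c by blast
  have S: "submatrix A {r} {c} \<in> carrier_mat 1 1" unfolding carrier_mat_def using dim_submatrix[of A "{r}" "{c}"] cI cJ by simp
  have e1: "{a\<in>{r}. a < r} = {}" "{a\<in>{c}. a < c} = {}" by auto
  have "submatrix A {r} {c} $$ (0,0) = A $$ (r,c)"
    using submatrix_index_card[of r A c "{r}" "{c}"] A r c unfolding e1 by simp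
  then have "det (submatrix A {r} {c}) \<noteq> 0" using det_single[OF S] nz by simp
  from vec_space.rank_gt_minor[OF A this] have "card {j. j < nc \<and> j \<in> {c}} \<le> vec_space.rank nr A" .
  moreover have "{j. j < nc \<and> j \<in> {c}} = {c}" using c by blast
  ultimately show ?thesis by simp
qed

lemma (in vec_space) rank_mult_le:
  assumes A: "A \<in> carrier_mat n k" and B: "B \<in> carrier_mat k q"
  shows "rank (A * B) \<le> rank A"
proof -
  have cA: "set (cols A) \<subseteq> carrier_vec n" using A cols_dim by blast
  have sub: "set (cols (A * B)) \<subseteq> span (set (cols A))"
  proof
    fix v assume "v \<in> set (cols (A * B))"
    then obtain j where j: "j < dim_col (A*B)" "v = col (A*B) j" by (metis cols_length cols_nth in_set_conv_nth)
    have "v = A *\<^sub>v col B j" using j A B by (simp add: mult_mat_vec_def)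
    moreover have "col B j \<in> carrier_vec (dim_col A)" using A B by (simp only: carrier_vec_def mem_Collect_eq dim_col carrier_matD)
    moreover have "A *\<^sub>v col B j \<in> carrier_vec (dim_row A)" by (simp only: carrier_vec_def mem_Collect_eq dim_mult_mat_vec)
    ultimately have "v \<in> col_space A" unfolding col_space_eq[OF A] by blast
    then show "v \<in> span (set (cols A))" unfolding col_space_def .
  qed
  have sub2: "span (set (cols (A*B))) \<subseteq> span (set (cols A))" using span_subsetI[OF cA sub] .
  have vs: "vectorspace class_ring (vs (span (set (cols A))))" using span_is_subspace[THEN subspace_is_vs, OF cA] by simp
  have sm: "submodule class_ring (span (set (cols A))) V" by (simp add: span_is_submodule cA)
  have ss: "VectorSpace.subspace class_ring (span (set (cols (A*B)))) (vs (span (set (cols A))))"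
    using vectorspace.span_is_subspace[OF vs, of "set (cols (A*B))", unfolded
    span_li_not_depend(1)[OF sub sm]] sub by simp
  have fin_dim:"vectorspace.fin_dim class_ring (vs (span (set (cols A))))"
       "vectorspace.fin_dim class_ring (vs (span (set (cols A)))\<lparr>carrier := span (set (cols (A*B)))\<rparr>)"
    using fin_dim_span_cols[OF A] fin_dim_span_cols[OF mult_carrier_mat[OF A B]] by simp_all
  show ?thesis unfolding rank_def using vectorspace.subspace_dim[OF vs ss fin_dim] by simp
qed

definition w :: "nat \<Rightarrow> int \<Rightarrow> complex" where "w n x = cis (2 * pi * of_int x / of_nat n)"

lemma w_mult: "w n x * w n y = w n (x+y)"
  unfolding w_def cis_mult by (simp add: add_divide_distrib distrib_left)

lemma w_cnj: "cnj (w n x) = w n (-x)"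
  unfolding w_def cis_cnj by simp

lemma w_pow: "w n x ^ k = w n (int k * x)"
  unfolding w_def DeMoivre by (simp add: mult_ac)

lemma w_1: assumes "n > 0" "int n dvd x" shows "w n x = 1"
proof -
  obtain k where k: "x = int n * k" using assms(2) by auto
  have "2 * pi * of_int x / of_nat n = 2 * pi * of_int k" using assms(1) k by simp
  then show ?thesis unfolding w_def by simp
qed

lemma w_ne1: assumes "n > 0" "\<not> int n dvd x" shows "w n x \<noteq> 1"
proof
  assume "w n x = 1"
  then have "cos (2 * pi * of_int x / of_nat n) = 1" unfolding w_def by (metis cis.sel(1) one_complex.sel(1))
  then obtain k :: int where k: "2 * pi * of_int x / of_nat n = of_int k * 2 * pi" using cos_one_2pi_int by blast
  then have "of_int x = of_int k * real n" using assms(1) by (simp add: field_simps)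
  then have "x = k * int n" by (metis of_int_eq_iff of_int_mult of_int_of_nat_eq)
  then show False using assms(2) by simp
qed

lemma K2: assumes "n > 0" shows "(\<Sum>t<n. w n (int t * x)) = (if int n dvd x then of_nat n else 0)"
proof (cases "int n dvd x")
  case True
  have "\<And>t. w n (int t * x) = 1" using True assms w_1 by auto
  then show ?thesis using True by simp
next
  case False
  have "(\<Sum>t<n. w n (int t * x)) = (\<Sum>t<n. w n x ^ t)" by (simp add: w_pow)
  also have "\<dots> = (w n x ^ n - 1) / (w n x - 1)" using geometric_sum[OF w_ne1[OF assms False]] .
  also have "w n x ^ n = 1" using w_pow w_1 assms by simp
  finally show ?thesis using False by simp
qed

lemma nat_mod_eq_int: "((x::nat) mod n = y mod n) \<longleftrightarrow> int n dvd (int x - int y)"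
proof -
  have "(x mod n = y mod n) \<longleftrightarrow> int x mod int n = int y mod int n" by (metis of_nat_eq_iff zmod_int)
  also have "\<dots> \<longleftrightarrow> int n dvd (int x - int y)" by (rule mod_eq_dvd_iff)
  finally show ?thesis .
qed

lemma L1: assumes "a < (n::nat)" shows "(j mod n = (a+i) mod n) \<longleftrightarrow> ((j + n - a) mod n = i mod n)"
proof -
  have e: "int (j + n - a) = int j + int n - int a" using assms by simp
  have "int n dvd (int j - int (a + i)) \<longleftrightarrow> int n dvd (int (j + n - a) - int i)"
  proof -
    have "int (j + n - a) - int i = (int j - int (a + i)) + int n" using e by simp
    then show ?thesis by (metis dvd_add_left_iff dvd_refl)
  qed
  then show ?thesis using nat_mod_eq_int by metis
qed

lemma L2: assumes "a < (n::nat)" shows "(l = (b + (j + n - a) mod n) mod n) \<longleftrightarrow> (l < n \<and> int n dvd (int j - int a - int l + int b))"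
proof -
  have "(b + (j + n - a) mod n) mod n = (b + j + n - a) mod n" using assms by (simp add: mod_add_right_eq add.assoc)
  then have "(l = (b + (j + n - a) mod n) mod n) \<longleftrightarrow> (l < n \<and> l mod n = (b + j + n - a) mod n)"
    by (metis mod_less mod_less_divisor assms not_less0 gr0I less_trans)
  also have "l mod n = (b + j + n - a) mod n \<longleftrightarrow> int l mod int n = int (b + j + n - a) mod int n"
    by (metis of_nat_eq_iff zmod_int)
  also have "\<dots> \<longleftrightarrow> int n dvd (int l - int (b + j + n - a))" by (rule mod_eq_dvd_iff)
  also have "int (b + j + n - a) = int b + int j + int n - int a" using assms by simp
  also have "int n dvd (int l - (int b + int j + int n - int a)) \<longleftrightarrow> int n dvd (int j - int a - int l + int b)"
  proof -
    have "int l - (int b + int j + int n - int a) = - ((int j - int a - int l + int b) + int n)" by simp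
    then show ?thesis by (metis dvd_add_left_iff dvd_minus_iff dvd_refl)
  qed
  finally show ?thesis .
qed

lemma K1: assumes "a < n" "b < n"
  shows "(\<Sum>i<n. if j = (a+i) mod n \<and> l = (b+i) mod n then 1 else (0::complex)) =
    (if j < n \<and> l < n \<and> int n dvd (int j - int a - int l + int b) then 1 else 0)"
proof (cases "j < n")
  case False
  then have "\<And>i. \<not> (j = (a+i) mod n)" using assms by (metis mod_less_divisor not_less0 gr0I less_trans)
  then show ?thesis using False by simp
next
  case True
  define i0 where "i0 = (j + n - a) mod n"
  have i0: "i0 < n" unfolding i0_def using assms by simp
  have eq: "(j = (a+i) mod n) \<longleftrightarrow> i = i0" if "i < n" for i
  proof -
    have "(j = (a+i) mod n) \<longleftrightarrow> j mod n = (a+i) mod n" using True by simp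
    also have "\<dots> \<longleftrightarrow> (j + n - a) mod n = i mod n" using L1 assms by blast
    also have "\<dots> \<longleftrightarrow> i = i0" unfolding i0_def using that by auto
    finally show ?thesis .
  qed
  have "(\<Sum>i<n. if j = (a+i) mod n \<and> l = (b+i) mod n then 1 else (0::complex)) =
       (\<Sum>i<n. if i = i0 then (if l = (b+i0) mod n then 1 else 0) else (0::complex))"
    by (rule sum.cong, simp, auto simp: eq)
  also have "\<dots> = (if l = (b+i0) mod n then 1 else 0)" using i0 by simp
  also have "(l = (b+i0) mod n) \<longleftrightarrow> (l < n \<and> int n dvd (int j - int a - int l + int b))" unfolding i0_def using L2 assms by blast
  finally show ?thesis using True by simp
qed


lemma adj_carrier: "A \<in> carrier_mat r c \<Longrightarrow> mat_adjoint A \<in> carrier_mat c r"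
  unfolding mat_adjoint_def by auto

lemma adj_index: "A \<in> carrier_mat r c \<Longrightarrow> i < c \<Longrightarrow> j < r \<Longrightarrow> mat_adjoint A $$ (i,j) = cnj (A $$ (j,i))"
  unfolding mat_adjoint_def by (auto simp: mat_of_rows_index)

lemma triple_index:
  fixes A X B :: "'a::comm_ring_1 mat"
  assumes "A \<in> carrier_mat r n" "X \<in> carrier_mat n p" "B \<in> carrier_mat p q" "j < r" "l < q"
  shows "(A * X * B) $$ (j,l) = (\<Sum>a<n. \<Sum>b<p. A $$ (j,a) * X $$ (a,b) * B $$ (b,l))"
  using assms
  apply (simp add: scalar_prod_def sum_distrib_left sum_distrib_right atLeast0LessThan)
  by (simp add: mult.assoc)

lemma sum3:
  fixes A :: "nat \<Rightarrow> nat \<Rightarrow> 'a::comm_ring_1"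
  shows "(\<Sum>i<N. \<Sum>a<p. \<Sum>b<q. A i a * X a b * B i b) = (\<Sum>a<p. \<Sum>b<q. X a b * (\<Sum>i<N. A i a * B i b))"
proof -
  have "(\<Sum>i<N. \<Sum>a<p. \<Sum>b<q. A i a * X a b * B i b) = (\<Sum>a<p. \<Sum>i<N. \<Sum>b<q. A i a * X a b * B i b)"
    by (rule sum.swap)
  also have "\<dots> = (\<Sum>a<p. \<Sum>b<q. \<Sum>i<N. A i a * X a b * B i b)"
    by (rule sum.cong[OF refl], rule sum.swap)
  also have "\<dots> = (\<Sum>a<p. \<Sum>b<q. X a b * (\<Sum>i<N. A i a * B i b))"
    by (simp add: sum_distrib_left mult_ac)
  finally show ?thesis .
qed

lemma Vmat_carrier: "Vmat d m i \<in> carrier_mat d (d+m)"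
  unfolding Vmat_def by simp

lemma Vmat_index: "a < d \<Longrightarrow> j < d+m \<Longrightarrow> Vmat d m i $$ (a,j) =
   (if i \<le> d then (if j = (a + i) mod (d+1) then 1 else 0) else (if j = i then 1 else 0))"
  unfolding Vmat_def by simp

definition cf :: "nat \<Rightarrow> nat \<Rightarrow> nat \<Rightarrow> nat \<Rightarrow> nat \<Rightarrow> complex" where
  "cf d a b j l = (if j < d+1 \<and> l < d+1 \<and> int (d+1) dvd (int j - int a - int l + int b) then 1 else 0)
     + (if d+1 \<le> j \<and> j = l then 1 else 0)"

lemma sum_split: "(n::nat) \<le> N \<Longrightarrow> (\<Sum>i<N. f i) = (\<Sum>i<n. f i) + (\<Sum>i\<in>{n..<N}. f i)"
proof -
  assume "n \<le> N"
  then have "{..<N} = {..<n} \<union> {n..<N}" by auto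
  moreover have "{..<n} \<inter> {n..<N} = {}" by auto
  ultimately show ?thesis by (simp add: sum.union_disjoint)
qed

lemma V_coef:
  assumes m: "m \<ge> 1" and a: "a < d" and b: "b < d" and j: "j < d+m" and l: "l < d+m"
  shows "(\<Sum>i<d+m. cnj (Vmat d m i $$ (a,j)) * Vmat d m i $$ (b,l)) = cf d a b j l"
proof -
  have "(\<Sum>i<d+m. cnj (Vmat d m i $$ (a,j)) * Vmat d m i $$ (b,l)) =
    (\<Sum>i<d+1. cnj (Vmat d m i $$ (a,j)) * Vmat d m i $$ (b,l)) + (\<Sum>i\<in>{d+1..<d+m}. cnj (Vmat d m i $$ (a,j)) * Vmat d m i $$ (b,l))"
    using m by (intro sum_split) simp
  also have "(\<Sum>i<d+1. cnj (Vmat d m i $$ (a,j)) * Vmat d m i $$ (b,l)) = 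
     (\<Sum>i<d+1. if j = (a+i) mod (d+1) \<and> l = (b+i) mod (d+1) then 1 else (0::complex))"
    by (rule sum.cong, simp, simp add: Vmat_index a b j l)
  also have "\<dots> = (if j < d+1 \<and> l < d+1 \<and> int (d+1) dvd (int j - int a - int l + int b) then 1 else 0)"
    using K1[of a "d+1" b j l] a b by simp
  also have "(\<Sum>i\<in>{d+1..<d+m}. cnj (Vmat d m i $$ (a,j)) * Vmat d m i $$ (b,l)) =
     (\<Sum>i\<in>{d+1..<d+m}. if i = j then (if j = l then 1 else 0) else (0::complex))"
    by (rule sum.cong, simp, auto simp add: Vmat_index a b j l)
  also have "\<dots> = (if d+1 \<le> j \<and> j = l then 1 else 0)" using j by simp
  finally show ?thesis unfolding cf_def .
qed


definition sR :: "nat \<Rightarrow> nat \<Rightarrow> complex" where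
  "sR d m = complex_of_real (sqrt (1 / (real (d*(d+m)) * real (d+1))))"
definition scR :: "nat \<Rightarrow> nat \<Rightarrow> complex" where
  "scR d m = complex_of_real (sqrt (1 / real (d*(d+m))))"

definition fR :: "nat \<Rightarrow> nat \<Rightarrow> nat \<Rightarrow> nat \<Rightarrow> complex" where
  "fR d m t r = (if t \<le> d then (if r \<le> d then sR d m * w (d+1) (int t * int r) else 0)
                 else (if r = t then scR d m else 0))"
definition gR :: "nat \<Rightarrow> nat \<Rightarrow> nat \<Rightarrow> complex" where
  "gR d t a = (if t \<le> d then cnj (w (d+1) (int t * int a)) else 1)"

definition Rk :: "nat \<Rightarrow> nat \<Rightarrow> nat \<Rightarrow> complex mat" where
  "Rk d m t = mat (d+m) d (\<lambda>(r,a). fR d m t r * gR d t a)"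

lemma Rk_carrier: "Rk d m t \<in> carrier_mat (d+m) d" unfolding Rk_def by simp

lemma Rk_index: "r < d+m \<Longrightarrow> a < d \<Longrightarrow> Rk d m t $$ (r,a) = fR d m t r * gR d t a"
  unfolding Rk_def by simp

lemma sR_sq: "sR d m * cnj (sR d m) = 1 / of_nat (d*(d+m)) / of_nat (d+1)"
proof -
  have "sR d m * cnj (sR d m) = complex_of_real (sqrt (1 / (real (d*(d+m)) * real (d+1))) * sqrt (1 / (real (d*(d+m)) * real (d+1))))"
    by (simp only: sR_def complex_cnj_complex_of_real of_real_mult)
  also have "sqrt (1 / (real (d*(d+m)) * real (d+1))) * sqrt (1 / (real (d*(d+m)) * real (d+1))) = 1 / (real (d*(d+m)) * real (d+1))"
    by simp
  finally show ?thesis by simp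
qed

lemma scR_sq: "scR d m * cnj (scR d m) = 1 / of_nat (d*(d+m))"
proof -
  have "scR d m * cnj (scR d m) = complex_of_real (sqrt (1 / real (d*(d+m))) * sqrt (1 / real (d*(d+m))))"
    by (simp only: scR_def complex_cnj_complex_of_real of_real_mult)
  also have "sqrt (1 / real (d*(d+m))) * sqrt (1 / real (d*(d+m))) = 1 / real (d*(d+m))"
    by simp
  finally show ?thesis by simp
qed

lemma w_combine: "w n (int t * int j) * cnj (w n (int t * int a)) * cnj (w n (int t * int l) * cnj (w n (int t * int b)))
   = w n (int t * (int j - int a - int l + int b))"
proof -
  have "w n (int t * int j) * cnj (w n (int t * int a)) * cnj (w n (int t * int l) * cnj (w n (int t * int b)))
     = w n (int t * int j + - (int t * int a) + (- (int t * int l) + int t * int b))"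
    by (simp add: w_cnj w_mult)
  also have "int t * int j + - (int t * int a) + (- (int t * int l) + int t * int b) = int t * (int j - int a - int l + int b)"
    by (simp add: algebra_simps)
  finally show ?thesis .
qed

lemma R_coef:
  assumes m: "m \<ge> 1" and a: "a < d" and b: "b < d" and j: "j < d+m" and l: "l < d+m"
  shows "(\<Sum>t<d+m. Rk d m t $$ (j,a) * cnj (Rk d m t $$ (l,b))) = 1 / of_nat (d*(d+m)) * cf d a b j l"
proof -
  let ?c = "1 / of_nat (d*(d+m)) :: complex"
  let ?F = "\<lambda>t. Rk d m t $$ (j,a) * cnj (Rk d m t $$ (l,b))"
  have "(\<Sum>t<d+m. ?F t) = (\<Sum>t<d+1. ?F t) + (\<Sum>t\<in>{d+1..<d+m}. ?F t)"
    using m by (intro sum_split) simp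
  also have "(\<Sum>t<d+1. ?F t) = (\<Sum>t<d+1. if j < d+1 \<and> l < d+1 then ?c / of_nat (d+1) * w (d+1) (int t * (int j - int a - int l + int b)) else 0)"
  proof (rule sum.cong[OF refl])
    fix t assume "t \<in> {..<d+1}"
    then have t: "t \<le> d" by simp
    show "?F t = (if j < d+1 \<and> l < d+1 then ?c / of_nat (d+1) * w (d+1) (int t * (int j - int a - int l + int b)) else 0)"
    proof (cases "j < d+1 \<and> l < d+1")
      case True
      have "?F t = (sR d m * cnj (sR d m)) * (w (d+1) (int t * int j) * cnj (w (d+1) (int t * int a)) * cnj (w (d+1) (int t * int l) * cnj (w (d+1) (int t * int b))))"
        using True t by (simp add: Rk_index a b j l fR_def gR_def mult_ac)
      then show ?thesis using True unfolding w_combine sR_sq by simp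
    next
      case False
      then show ?thesis using t by (auto simp add: Rk_index a b j l fR_def gR_def)
    qed
  qed
  also have "\<dots> = (if j < d+1 \<and> l < d+1 then ?c / of_nat (d+1) * (\<Sum>t<d+1. w (d+1) (int t * (int j - int a - int l + int b))) else 0)"
    by (cases "j < d+1 \<and> l < d+1", simp_all only: simp_thms if_True if_False sum_distrib_left[symmetric] sum.neutral_const)
  also have "\<dots> = ?c * (if j < d+1 \<and> l < d+1 \<and> int (d+1) dvd (int j - int a - int l + int b) then 1 else 0)"
  proof -
    have nz: "(of_nat (d+1)::complex) \<noteq> 0" by (simp only: of_nat_eq_0_iff)
    have nz2: "1 + (of_nat d::complex) \<noteq> 0" using nz by simp
    have K: "(\<Sum>t<d+1. w (d+1) (int t * (int j - int a - int l + int b))) = (if int (d+1) dvd (int j - int a - int l + int b) then of_nat (d+1) else 0)"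
      by (rule K2) simp
    show ?thesis unfolding K using nz nz2 by auto
  qed
  also have "(\<Sum>t\<in>{d+1..<d+m}. ?F t) = (\<Sum>t\<in>{d+1..<d+m}. if t = j then (if j = l then ?c else 0) else 0)"
  proof (rule sum.cong[OF refl])
    fix t assume "t \<in> {d+1..<d+m}"
    then have t: "\<not> t \<le> d" by simp
    show "?F t = (if t = j then (if j = l then ?c else 0) else 0)"
      using t by (auto simp add: Rk_index a b j l fR_def gR_def scR_sq)
  qed
  also have "\<dots> = ?c * (if d+1 \<le> j \<and> j = l then 1 else 0)" using j by simp
  finally show ?thesis unfolding cf_def by (simp add: distrib_left)
qed


lemma mat_sum_index: "j < nr \<Longrightarrow> l < nc \<Longrightarrow> mat_sum nr nc f N $$ (j,l) = (\<Sum>i<N. f i $$ (j,l))"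
  unfolding mat_sum_def by simp

lemma mat_sum_carrier: "mat_sum nr nc f N \<in> carrier_mat nr nc"
  unfolding mat_sum_def by simp

lemma Phi_entry:
  assumes m: "m \<ge> 1" and X: "X \<in> carrier_mat d d" and j: "j < d+m" and l: "l < d+m"
  shows "Phi_map d m X $$ (j,l) = (\<Sum>a<d. \<Sum>b<d. X $$ (a,b) * (1 / of_nat (d*(d+m)) * cf d a b j l))"
proof -
  let ?c = "1 / of_nat (d*(d+m)) :: complex"
  have "Phi_map d m X $$ (j,l) = ?c * (\<Sum>i<d+m. (mat_adjoint (Vmat d m i) * X * Vmat d m i) $$ (j,l))"
    unfolding Phi_map_def using j l by (simp add: mat_sum_def)
  also have "(\<Sum>i<d+m. (mat_adjoint (Vmat d m i) * X * Vmat d m i) $$ (j,l)) =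
     (\<Sum>i<d+m. \<Sum>a<d. \<Sum>b<d. cnj (Vmat d m i $$ (a,j)) * X $$ (a,b) * Vmat d m i $$ (b,l))"
  proof (rule sum.cong[OF refl])
    fix i
    have "(mat_adjoint (Vmat d m i) * X * Vmat d m i) $$ (j,l) = (\<Sum>a<d. \<Sum>b<d. mat_adjoint (Vmat d m i) $$ (j,a) * X $$ (a,b) * Vmat d m i $$ (b,l))"
      by (rule triple_index[OF adj_carrier[OF Vmat_carrier] X Vmat_carrier j l])
    also have "\<dots> = (\<Sum>a<d. \<Sum>b<d. cnj (Vmat d m i $$ (a,j)) * X $$ (a,b) * Vmat d m i $$ (b,l))"
      using j by (simp add: adj_index[OF Vmat_carrier])
    finally show "(mat_adjoint (Vmat d m i) * X * Vmat d m i) $$ (j,l) = (\<Sum>a<d. \<Sum>b<d. cnj (Vmat d m i $$ (a,j)) * X $$ (a,b) * Vmat d m i $$ (b,l))" .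
  qed
  also have "\<dots> = (\<Sum>a<d. \<Sum>b<d. X $$ (a,b) * (\<Sum>i<d+m. cnj (Vmat d m i $$ (a,j)) * Vmat d m i $$ (b,l)))"
    by (rule sum3)
  also have "\<dots> = (\<Sum>a<d. \<Sum>b<d. X $$ (a,b) * cf d a b j l)"
    using V_coef[OF m _ _ j l] by simp
  finally show ?thesis by (simp add: sum_distrib_left mult_ac)
qed

lemma Kraus_entry:
  assumes m: "m \<ge> 1" and X: "X \<in> carrier_mat d d" and j: "j < d+m" and l: "l < d+m"
  shows "mat_sum (d+m) (d+m) (\<lambda>t. Rk d m t * X * mat_adjoint (Rk d m t)) (d+m) $$ (j,l) = (\<Sum>a<d. \<Sum>b<d. X $$ (a,b) * (1 / of_nat (d*(d+m)) * cf d a b j l))"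
proof -
  have "mat_sum (d+m) (d+m) (\<lambda>t. Rk d m t * X * mat_adjoint (Rk d m t)) (d+m) $$ (j,l) =
     (\<Sum>t<d+m. (Rk d m t * X * mat_adjoint (Rk d m t)) $$ (j,l))"
    using j l by (simp add: mat_sum_def)
  also have "\<dots> = (\<Sum>t<d+m. \<Sum>a<d. \<Sum>b<d. Rk d m t $$ (j,a) * X $$ (a,b) * cnj (Rk d m t $$ (l,b)))"
  proof (rule sum.cong[OF refl])
    fix t
    have "(Rk d m t * X * mat_adjoint (Rk d m t)) $$ (j,l) = (\<Sum>a<d. \<Sum>b<d. Rk d m t $$ (j,a) * X $$ (a,b) * mat_adjoint (Rk d m t) $$ (b,l))"
      by (rule triple_index[OF Rk_carrier X adj_carrier[OF Rk_carrier] j l])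
    also have "\<dots> = (\<Sum>a<d. \<Sum>b<d. Rk d m t $$ (j,a) * X $$ (a,b) * cnj (Rk d m t $$ (l,b)))"
      using l by (simp add: adj_index[OF Rk_carrier])
    finally show "(Rk d m t * X * mat_adjoint (Rk d m t)) $$ (j,l) = (\<Sum>a<d. \<Sum>b<d. Rk d m t $$ (j,a) * X $$ (a,b) * cnj (Rk d m t $$ (l,b)))" .
  qed
  also have "\<dots> = (\<Sum>a<d. \<Sum>b<d. X $$ (a,b) * (\<Sum>t<d+m. Rk d m t $$ (j,a) * cnj (Rk d m t $$ (l,b))))"
    by (rule sum3)
  also have "\<dots> = (\<Sum>a<d. \<Sum>b<d. X $$ (a,b) * (1 / of_nat (d*(d+m)) * cf d a b j l))"
    using R_coef[OF m _ _ j l] by simp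
  finally show ?thesis .
qed

lemma Phi_eq:
  assumes m: "m \<ge> 1" and X: "X \<in> carrier_mat d d"
  shows "Phi_map d m X = mat_sum (d+m) (d+m) (\<lambda>t. Rk d m t * X * mat_adjoint (Rk d m t)) (d+m)"
proof (rule eq_matI)
  fix j l assume "j < dim_row (mat_sum (d+m) (d+m) (\<lambda>t. Rk d m t * X * mat_adjoint (Rk d m t)) (d+m))"
    "l < dim_col (mat_sum (d+m) (d+m) (\<lambda>t. Rk d m t * X * mat_adjoint (Rk d m t)) (d+m))"
  then have j: "j < d+m" and l: "l < d+m" by (simp_all add: mat_sum_def)
  show "Phi_map d m X $$ (j,l) = mat_sum (d+m) (d+m) (\<lambda>t. Rk d m t * X * mat_adjoint (Rk d m t)) (d+m) $$ (j,l)"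
    unfolding Phi_entry[OF m X j l] Kraus_entry[OF m X j l] ..
qed (simp_all add: Phi_map_def mat_sum_def)


lemma mat_sum_Suc:
  assumes "f K \<in> carrier_mat k k"
  shows "mat_sum k k f (Suc K) = mat_sum k k f K + f K"
  by (rule eq_matI, insert assms, auto simp: mat_sum_def)

lemma rank_mat_sum:
  assumes "\<And>i. i < K \<Longrightarrow> f i \<in> carrier_mat k k \<and> vec_space.rank k (f i) \<le> 1"
  shows "vec_space.rank k (mat_sum k k f K) \<le> K"
  using assms
proof (induction K)
  case 0
  have "mat_sum k k f 0 = 0\<^sub>m k k" by (rule eq_matI, auto simp: mat_sum_def)
  then show ?case using vec_space.rank_0I by (metis le_refl)
next
  case (Suc K)
  have fK: "f K \<in> carrier_mat k k" "vec_space.rank k (f K) \<le> 1" using Suc.prems by auto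
  have IH: "vec_space.rank k (mat_sum k k f K) \<le> K" using Suc.IH Suc.prems by auto
  have "vec_space.rank k (mat_sum k k f (Suc K)) = vec_space.rank k (mat_sum k k f K + f K)"
    using mat_sum_Suc[of f K k, OF fK(1)] by simp
  also have "\<dots> \<le> vec_space.rank k (mat_sum k k f K) + vec_space.rank k (f K)"
    by (rule vec_space.rank_subadditive[OF mat_sum_carrier fK(1)])
  finally show ?case using IH fK(2) by simp
qed

lemma dvd_small_eq: assumes "j < n" "l < n" "int n dvd (int j - int l)" shows "j = l"
proof -
  have "j mod n = l mod n" using nat_mod_eq_int assms(3) by blast
  then show ?thesis using assms(1,2) by simp
qed

lemma cf_diag: "j < d+m \<Longrightarrow> l < d+m \<Longrightarrow> cf d a a j l = (if j = l then 1 else 0)"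
  unfolding cf_def using dvd_small_eq[of j "d+1" l] by auto

lemma sum_delta_mult: "(a::nat) < d \<Longrightarrow> (\<Sum>b<d. (if a = b then 1 else 0) * F b) = (F a::complex)"
proof -
  assume a: "a < d"
  have "(\<Sum>b<d. (if a = b then 1 else 0) * F b) = (\<Sum>b<d. if a = b then F b else 0)" by (rule sum.cong) auto
  also have "\<dots> = F a" using a by (simp add: sum.delta)
  finally show ?thesis .
qed

lemma Phi_one:
  assumes d: "d \<ge> 1" and m: "m \<ge> 1"
  shows "Phi_map d m (1\<^sub>m d) = (1 / of_nat (d+m)) \<cdot>\<^sub>m 1\<^sub>m (d+m)"
proof (rule eq_matI)
  fix j l assume "j < dim_row ((1 / of_nat (d+m)) \<cdot>\<^sub>m 1\<^sub>m (d+m) :: complex mat)"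
     "l < dim_col ((1 / of_nat (d+m)) \<cdot>\<^sub>m 1\<^sub>m (d+m) :: complex mat)"
  then have j: "j < d+m" and l: "l < d+m" by simp_all
  have "Phi_map d m (1\<^sub>m d) $$ (j,l) = (\<Sum>a<d. \<Sum>b<d. (1\<^sub>m d :: complex mat) $$ (a,b) * (1 / of_nat (d*(d+m)) * cf d a b j l))"
    by (rule Phi_entry[OF m one_carrier_mat j l])
  also have "\<dots> = (\<Sum>a<d. 1 / of_nat (d*(d+m)) * cf d a a j l)"
    proof (rule sum.cong[OF refl])
    fix a assume "a \<in> {..<d}"
    then have a: "a < d" by simp
    have "(\<Sum>b<d. (1\<^sub>m d :: complex mat) $$ (a,b) * (1 / of_nat (d*(d+m)) * cf d a b j l)) = (\<Sum>b<d. (if a = b then 1 else 0) * (1 / of_nat (d*(d+m)) * cf d a b j l))"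
      by (rule sum.cong[OF refl]) (simp add: a)
    also have "\<dots> = 1 / of_nat (d*(d+m)) * cf d a a j l" by (rule sum_delta_mult[OF a])
    finally show "(\<Sum>b<d. (1\<^sub>m d :: complex mat) $$ (a,b) * (1 / of_nat (d*(d+m)) * cf d a b j l)) = 1 / of_nat (d*(d+m)) * cf d a a j l" .
  qed
  also have "\<dots> = of_nat d * (1 / of_nat (d*(d+m))) * (if j = l then 1 else 0)"
    using cf_diag[OF j l] by simp
  also have "\<dots> = (1 / of_nat (d+m)) * (if j = l then 1 else 0)"
  proof -
    have nz: "(of_nat d::complex) \<noteq> 0" using d by simp
    have "(of_nat (d+m)::complex) \<noteq> 0" using d by (simp only: of_nat_eq_0_iff)
    then have nz2: "(of_nat d + of_nat m::complex) \<noteq> 0" by simp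
    have nz3: "of_nat d * (of_nat d + of_nat m) \<noteq> (0::complex)" using nz nz2 by simp
    then have nz4: "of_nat d * of_nat d + of_nat d * of_nat m \<noteq> (0::complex)" by (simp add: distrib_left)
    show ?thesis using nz nz2 nz4 by (simp add: field_simps)
  qed
  finally show "Phi_map d m (1\<^sub>m d) $$ (j,l) = ((1 / of_nat (d+m)) \<cdot>\<^sub>m 1\<^sub>m (d+m)) $$ (j,l)"
    using j l by simp
qed (simp_all add: Phi_map_def mat_sum_def)


lemma w_zero: "w n 0 = 1" unfolding w_def by simp

lemma sR_nz: "d \<ge> 1 \<Longrightarrow> sR d m \<noteq> 0"
  unfolding sR_def by simp

lemma scR_nz: "d \<ge> 1 \<Longrightarrow> scR d m \<noteq> 0"
  unfolding scR_def by simp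

lemma Rk_rank:
  assumes d: "d \<ge> 1" and t: "t < d+m"
  shows "mrank (d+m) (Rk d m t) = 1"
proof -
  have le: "vec_space.rank (d+m) (Rk d m t) \<le> 1"
    by (rule vec_space.rank_le_1_product_entries[OF Rk_carrier, where f = "fR d m t" and g = "gR d t"])
       (simp add: Rk_def)
  have ge: "1 \<le> vec_space.rank (d+m) (Rk d m t)"
  proof (cases "t \<le> d")
    case True
    have "Rk d m t $$ (0,0) = sR d m" using True d by (simp add: Rk_index fR_def gR_def w_zero)
    then show ?thesis using rank_ge_1[OF Rk_carrier, of 0 d m 0 t] d sR_nz[OF d] by simp
  next
    case False
    have "Rk d m t $$ (t,0) = scR d m" using False d t by (simp add: Rk_index fR_def gR_def)
    then show ?thesis using rank_ge_1[OF Rk_carrier, of t d m 0 t] d t scR_nz[OF d] by simp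
  qed
  show ?thesis unfolding mrank_def using le ge by simp
qed

lemma upper:
  assumes d: "d \<ge> 1" and m: "m \<ge> 1"
  shows "rank_one_kraus d (d+m) (Phi_map d m) (d+m)"
  unfolding rank_one_kraus_def
  by (rule exI[of _ "Rk d m"]) (simp add: Rk_carrier Rk_rank[OF d] Phi_eq[OF m])

lemma lower:
  assumes d: "d \<ge> 1" and m: "m \<ge> 1" and K: "rank_one_kraus d (d+m) (Phi_map d m) K"
  shows "d + m \<le> K"
proof -
  obtain R where R: "\<And>i. i < K \<Longrightarrow> R i \<in> carrier_mat (d+m) d \<and> mrank (d+m) (R i) = 1"
    and Phi: "\<And>X. X \<in> carrier_mat d d \<Longrightarrow> Phi_map d m X = mat_sum (d+m) (d+m) (\<lambda>i. R i * X * mat_adjoint (R i)) K"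
    using K unfolding rank_one_kraus_def by blast
  have eq: "(1 / of_nat (d+m)) \<cdot>\<^sub>m 1\<^sub>m (d+m) = mat_sum (d+m) (d+m) (\<lambda>i. R i * 1\<^sub>m d * mat_adjoint (R i)) K"
    using Phi[OF one_carrier_mat] Phi_one[OF d m] by simp
  have "(of_nat (d+m)::complex) \<noteq> 0" using d by (simp only: of_nat_eq_0_iff)
  then have "det ((1 / of_nat (d+m)) \<cdot>\<^sub>m 1\<^sub>m (d+m) :: complex mat) \<noteq> 0" by simp
  then have "vec_space.rank (d+m) ((1 / of_nat (d+m)) \<cdot>\<^sub>m 1\<^sub>m (d+m) :: complex mat) = d+m"
    using vec_space.det_rank_iff[of _ "d+m"] by (metis one_carrier_mat smult_carrier_mat)
  moreover have "vec_space.rank (d+m) (mat_sum (d+m) (d+m) (\<lambda>i. R i * 1\<^sub>m d * mat_adjoint (R i)) K) \<le> K"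
  proof (rule rank_mat_sum)
    fix i assume i: "i < K"
    have Ri: "R i \<in> carrier_mat (d+m) d" "vec_space.rank (d+m) (R i) = 1" using R[OF i] unfolding mrank_def by auto
    have c1: "R i * 1\<^sub>m d \<in> carrier_mat (d+m) d" using Ri by simp
    have "vec_space.rank (d+m) (R i * 1\<^sub>m d * mat_adjoint (R i)) \<le> vec_space.rank (d+m) (R i * 1\<^sub>m d)"
      by (rule vec_space.rank_mult_le[OF c1 adj_carrier[OF Ri(1)]])
    also have "R i * 1\<^sub>m d = R i" using Ri by simp
    finally show "R i * 1\<^sub>m d * mat_adjoint (R i) \<in> carrier_mat (d+m) (d+m) \<and> vec_space.rank (d+m) (R i * 1\<^sub>m d * mat_adjoint (R i)) \<le> 1"
      using Ri adj_carrier[OF Ri(1)] by simp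
  qed
  ultimately show ?thesis using eq by simp
qed

theorem mainTheorem4:
  fixes d m :: nat
  assumes "d \<ge> 2" and "m \<ge> 1"
  shows "entanglement_breaking d (d+m) (Phi_map d m) \<and> eb_rank d (d+m) (Phi_map d m) = d + m"
proof -
  have d: "d \<ge> 1" using assms(1) by simp
  have u: "rank_one_kraus d (d+m) (Phi_map d m) (d+m)" by (rule upper[OF d assms(2)])
  have "eb_rank d (d+m) (Phi_map d m) = d + m"
    unfolding eb_rank_def
    by (rule Least_equality, rule u, rule lower[OF d assms(2)])
  then show ?thesis using u unfolding entanglement_breaking_def by blast
qed

end
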